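(* In the setting of the context (QFSR5 scheme), suppose the flux $f$ is a quadratic polynomial in $u$, and take $\kappa=1/3$, $\kappa_3=-2/3$, $\theta_2=2/3$, $a=2/15$, $b=16/45$, $c=4/5$. Let $\mathcal{E}_j=(\Phi_{j+1/2}-\Phi_{j-1/2})/h$ evaluated on exact nodal values. Then as $h\to0$, $$\mathcal{E}_j=\frac{d}{dx}f(u(x))\Big|_{x=x_j}+O(h^5).$$
   Context: Let $h>0$, uniform grid $x_i=ih$, $i\in\mathbb{Z}$. Let $u$ be a smooth real function of $x$, $u_i=u(x_i)$; let $f$ (flux) and $D$ (dissipation coefficient) be smooth real functions of one variable. Define successive central differences $(u_x)_i=(u_{i+1}-u_{i-1})/(2h)$, $(u_{xx})_i=((u_x)_{i+1}-(u_x)_{i-1})/(2h)$. For the face $i+1/2$ with $j=i$, $k=i+1$, let $T_j=\frac h4((u_x)_k-(u_x)_j)-\frac{h^2}{4}(u_{xx})_j$, $T_k=\frac h4((u_x)_k-(u_x)_j)-\frac{h^2}{4}(u_{xx})_k$, and reconstructed states $u_L=\kappa\frac{u_j+u_k}{2}+(1-\kappa)[u_j+\frac h2(u_x)_j]+\kappa_3T_j$, $u_R=\kappa\frac{u_j+u_k}{2}+(1-\kappa)[u_k-\frac h2(u_x)_k]+\kappa_3T_k$. Let $\Delta_L=u_L-u_j$, $\Delta_R=u_R-u_k$, and with parameters $a,b,c,\theta_2$ define $L_j=aT_j$, $L_k=aT_k$, $Q_j=b\,f''(u_j)\big(\tfrac{h^2}{4}(u_{xx})_j\big)^2+c\,f''(u_j)\big(\tfrac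 h2(u_x)_j\big)T_j$, $Q_k=b\,f''(u_k)\big(\tfrac{h^2}{4}(u_{xx})_k\big)^2+c\,f''(u_k)\big(-\tfrac h2(u_x)_k\big)T_k$. The reconstructed fluxes are $f_L=f(u_j)+f'(u_j)(\Delta_L+L_j)+\frac{\theta_2}{2}\big(f''(u_j)\Delta_L^2+Q_j\big)$, $f_R=f(u_k)+f'(u_k)(\Delta_R+L_k)+\frac{\theta_2}{2}\big(f''(u_k)\Delta_R^2+Q_k\big)$. Numerical flux: $\Phi_{i+1/2}=\frac12(f_L+f_R)-\frac12D_{i+1/2}(u_R-u_L)$, with $D_{i+1/2}=\bar D(u_i,u_{i+1})$ for a smooth symmetric $\bar D$ with $\bar D(v,v)=D(v)$. *)

theory Defs
  imports "HOL-Analysis.Analysis" "HOL-Library.Landau_Symbols"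
begin

definition smooth1 :: "(real \<Rightarrow> real) \<Rightarrow> bool" where
  "smooth1 g \<longleftrightarrow> (\<exists>G :: nat \<Rightarrow> real \<Rightarrow> real. G 0 = g \<and>
     (\<forall>n x. (G n has_real_derivative G (Suc n) x) (at x)))"

definition smooth2 :: "(real \<Rightarrow> real \<Rightarrow> real) \<Rightarrow> bool" where
  "smooth2 g \<longleftrightarrow> (\<exists>P :: nat \<Rightarrow> nat \<Rightarrow> real \<Rightarrow> real \<Rightarrow> real. P 0 0 = g \<and>
     (\<forall>m n a b. ((\<lambda>s. P m n s b) has_real_derivative P (Suc m) n a b) (at a) \<and>
                ((\<lambda>t. P m n a t) has_real_derivative P m (Suc n) a b) (at b)) \<and>
     (\<forall>m n. continuous_on UNIV (\<lambda>(a, b). P m n a b)))"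

definition nodal :: "(real \<Rightarrow> real) \<Rightarrow> real \<Rightarrow> real \<Rightarrow> int \<Rightarrow> real" where
  "nodal u h x k = u (x + of_int k * h)"

definition cdx :: "(real \<Rightarrow> real) \<Rightarrow> real \<Rightarrow> real \<Rightarrow> int \<Rightarrow> real" where
  "cdx u h x k = (nodal u h x (k + 1) - nodal u h x (k - 1)) / (2 * h)"

definition cdxx :: "(real \<Rightarrow> real) \<Rightarrow> real \<Rightarrow> real \<Rightarrow> int \<Rightarrow> real" where
  "cdxx u h x k = (cdx u h x (k + 1) - cdx u h x (k - 1)) / (2 * h)"

text \<open>QFSR5 numerical flux at the face k+1/2 (j = k, right cell = k+1), with
  general parameters kappa, kappa3, theta2, a, b, c; f' and f'' are the
  derivatives of the flux f.\<close>
definition qfsr_flux ::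
  "real \<Rightarrow> real \<Rightarrow> real \<Rightarrow> real \<Rightarrow> real \<Rightarrow> real \<Rightarrow>
   (real \<Rightarrow> real) \<Rightarrow> (real \<Rightarrow> real \<Rightarrow> real) \<Rightarrow> (real \<Rightarrow> real) \<Rightarrow> real \<Rightarrow> real \<Rightarrow> int \<Rightarrow> real"
where
  "qfsr_flux \<kappa> \<kappa>3 \<theta>2 a b c f Db u h x j =
    (let k = j + 1;
         uj = nodal u h x j; uk = nodal u h x k;
         uxj = cdx u h x j; uxk = cdx u h x k;
         uxxj = cdxx u h x j; uxxk = cdxx u h x k;
         f1 = deriv f; f2 = deriv (deriv f);
         Tj = h / 4 * (uxk - uxj) - h^2 / 4 * uxxj;
         Tk = h / 4 * (uxk - uxj) - h^2 / 4 * uxxk;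
         uL = \<kappa> * (uj + uk) / 2 + (1 - \<kappa>) * (uj + h / 2 * uxj) + \<kappa>3 * Tj;
         uR = \<kappa> * (uj + uk) / 2 + (1 - \<kappa>) * (uk - h / 2 * uxk) + \<kappa>3 * Tk;
         \<Delta>L = uL - uj; \<Delta>R = uR - uk;
         Lj = a * Tj; Lk = a * Tk;
         Qj = b * f2 uj * (h^2 / 4 * uxxj)^2 + c * f2 uj * (h / 2 * uxj) * Tj;
         Qk = b * f2 uk * (h^2 / 4 * uxxk)^2 + c * f2 uk * (- (h / 2 * uxk)) * Tk;
         fL = f uj + f1 uj * (\<Delta>L + Lj) + \<theta>2 / 2 * (f2 uj * \<Delta>L^2 + Qj);
         fR = f uk + f1 uk * (\<Delta>R + Lk) + \<theta>2 / 2 * (f2 uk * \<Delta>R^2 + Qk)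
     in (fL + fR) / 2 - Db uj uk * (uR - uL) / 2)"

definition qfsr5_residual ::
  "(real \<Rightarrow> real) \<Rightarrow> (real \<Rightarrow> real \<Rightarrow> real) \<Rightarrow> (real \<Rightarrow> real) \<Rightarrow> real \<Rightarrow> real \<Rightarrow> real"
where
  "qfsr5_residual f Db u x h =
    (qfsr_flux (1/3) (-2/3) (2/3) (2/15) (16/45) (4/5) f Db u h x 0
     - qfsr_flux (1/3) (-2/3) (2/3) (2/15) (16/45) (4/5) f Db u h x (-1)) / h"

end

theory Submission
  imports Defs
begin

definition ebd :: "(real \<Rightarrow> real) \<Rightarrow> bool" where
  "ebd F \<longleftrightarrow> (\<exists>C. eventually (\<lambda>h. \<bar>F h\<bar> \<le> C) (at_right 0))"

lemma ebdI: "eventually (\<lambda>h. \<bar>F h\<bar> \<le> C) (at_right 0) \<Longrightarrow> ebd F"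
  unfolding ebd_def by blast

lemma ev01: "eventually (\<lambda>h. h \<in> {0<..<1}) (at_right (0::real))"
  by (rule eventually_at_right_real) simp

lemma ebd_const: "ebd (\<lambda>h. c)"
  by (rule ebdI[of _ "\<bar>c\<bar>"]) simp

lemma ebd_id: "ebd (\<lambda>h. h)"
proof (rule ebdI[of _ 1])
  show "eventually (\<lambda>h. \<bar>h\<bar> \<le> (1::real)) (at_right 0)"
    using ev01 by (rule eventually_mono) auto
qed

lemma ebd_add: "ebd F \<Longrightarrow> ebd G \<Longrightarrow> ebd (\<lambda>h. F h + G h)"
  unfolding ebd_def
proof (elim exE)
  fix C D assume "eventually (\<lambda>h. \<bar>F h\<bar> \<le> C) (at_right 0)" "eventually (\<lambda>h. \<bar>G h\<bar> \<le> D) (at_right 0)"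
  then have "eventually (\<lambda>h. \<bar>F h + G h\<bar> \<le> C + D) (at_right 0)"
    by eventually_elim (simp add: abs_triangle_ineq order_trans[OF abs_triangle_ineq] add_mono)
  then show "\<exists>C. eventually (\<lambda>h. \<bar>F h + G h\<bar> \<le> C) (at_right 0)" by blast
qed

lemma ebd_minus: "ebd F \<Longrightarrow> ebd (\<lambda>h. - F h)"
  unfolding ebd_def by simp

lemma ebd_diff: "ebd F \<Longrightarrow> ebd G \<Longrightarrow> ebd (\<lambda>h. F h - G h)"
  using ebd_add[of F "\<lambda>h. - G h"] ebd_minus[of G] by simp

lemma ebd_mult: "ebd F \<Longrightarrow> ebd G \<Longrightarrow> ebd (\<lambda>h. F h * G h)"
  unfolding ebd_def
proof (elim exE)
  fix C D assume "eventually (\<lambda>h. \<bar>F h\<bar> \<le> C) (at_right 0)" "eventually (\<lambda>h. \<bar>G h\<bar> \<le> D) (at_right 0)"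
  then have "eventually (\<lambda>h. \<bar>F h * G h\<bar> \<le> C * D) (at_right 0)"
    by eventually_elim (simp add: abs_mult mult_mono')
  then show "\<exists>C. eventually (\<lambda>h. \<bar>F h * G h\<bar> \<le> C) (at_right 0)" by blast
qed

lemma ebd_pow: "ebd F \<Longrightarrow> ebd (\<lambda>h. F h ^ n)"
  by (induction n) (simp_all add: ebd_const ebd_mult)

lemma ebd_bigo: "ebd B \<Longrightarrow> eventually (\<lambda>h. E h = h^5 * B h) (at_right 0) \<Longrightarrow> E \<in> O[at_right 0](\<lambda>h. h^5)"
  unfolding ebd_def
proof (elim exE)
  fix C assume "eventually (\<lambda>h. \<bar>B h\<bar> \<le> C) (at_right 0)" "eventually (\<lambda>h. E h = h^5 * B h) (at_right 0)"
  then have "eventually (\<lambda>h. norm (E h) \<le> C * norm (h^5)) (at_right 0)"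
  proof eventually_elim
    case (elim h)
    have "norm (E h) = \<bar>B h\<bar> * \<bar>h^5\<bar>" using elim by (simp add: abs_mult)
    also have "\<dots> \<le> C * norm (h^5)" using elim by (simp add: mult_right_mono)
    finally show ?case .
  qed
  then show ?thesis by (rule bigoI)
qed

lemma bound_cont:
  fixes g :: "real \<Rightarrow> real"
  assumes "\<And>y. isCont g y"
  shows "\<exists>M. \<forall>y\<in>cball c R. \<bar>g y\<bar> \<le> M"
proof -
  have "compact (g ` cball c R)"
    by (rule compact_continuous_image) (auto intro: continuous_at_imp_continuous_on assms)
  then obtain M where "\<forall>z\<in>g ` cball c R. norm z \<le> M"
    using compact_imp_bounded bounded_iff by metis
  then show ?thesis by auto
qed

lemma taylor_ebd:
  fixes G :: "nat \<Rightarrow> real \<Rightarrow> real"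
  assumes GD: "\<And>n y. (G n has_real_derivative G (Suc n) y) (at y)"
  shows "ebd (\<lambda>h. (G 0 (x + k*h) - (\<Sum>m<n. G m x / fact m * (k*h)^m)) / h^n)"
proof -
  have dsh: "((\<lambda>y. G m (x + y)) has_real_derivative G (Suc m) (x + z)) (at z)" for m z
  proof -
    have "((\<lambda>y. x + y) has_real_derivative 1) (at z)" by (auto intro!: derivative_eq_intros)
    from DERIV_chain2[OF GD this] show ?thesis by simp
  qed
  obtain M where M: "\<forall>y\<in>cball x \<bar>k\<bar>. \<bar>G n y\<bar> \<le> M"
    using bound_cont[of "G n" x "\<bar>k\<bar>"] GD DERIV_isCont by blast
  show ?thesis
  proof (rule ebdI[of _ "M / fact n * \<bar>k\<bar>^n"])
    show "eventually (\<lambda>h. \<bar>(G 0 (x + k*h) - (\<Sum>m<n. G m x / fact m * (k*h)^m)) / h^n\<bar> \<le> M / fact n * \<bar>k\<bar>^n) (at_right 0)"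
      using ev01
    proof (rule eventually_mono)
      fix h :: real assume h: "h \<in> {0<..<1}"
      have "\<exists>t. \<bar>t\<bar> \<le> \<bar>k*h\<bar> \<and> G 0 (x + k*h) = (\<Sum>m<n. (G m (x+0) / fact m) * (k*h) ^ m) + (G n (x+t) / fact n) * (k*h) ^ n"
        by (rule Maclaurin_all_le[where diff = "\<lambda>m y. G m (x + y)" and f = "\<lambda>y. G 0 (x+y)"])
           (use dsh in auto)
      then obtain t where t: "\<bar>t\<bar> \<le> \<bar>k*h\<bar>" and eq: "G 0 (x + k*h) = (\<Sum>m<n. (G m x / fact m) * (k*h) ^ m) + (G n (x+t) / fact n) * (k*h) ^ n"
        by auto
      have "\<bar>k\<bar> * h \<le> \<bar>k\<bar>" using h by (simp add: mult_left_le)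
      then have "\<bar>t\<bar> \<le> \<bar>k\<bar>" using t h by (simp add: abs_mult)
      then have "\<bar>G n (x+t)\<bar> \<le> M" using M by (auto simp: dist_real_def)
      moreover have "(G 0 (x + k*h) - (\<Sum>m<n. G m x / fact m * (k*h)^m)) / h^n = G n (x+t) / fact n * k^n"
        using h by (simp add: eq power_mult_distrib)
      ultimately show "\<bar>(G 0 (x + k*h) - (\<Sum>m<n. G m x / fact m * (k*h)^m)) / h^n\<bar> \<le> M / fact n * \<bar>k\<bar>^n"
        by (simp add: abs_mult power_abs divide_right_mono mult_right_mono)
    qed
  qed
qed


lemma bound2:
  fixes g :: "real \<Rightarrow> real \<Rightarrow> real"
  assumes "continuous_on UNIV (\<lambda>(a, b). g a b)"
  shows "\<exists>B. \<forall>a b. \<bar>a\<bar> \<le> R \<longrightarrow> \<bar>b\<bar> \<le> R \<longrightarrow> \<bar>g a b\<bar> \<le> B"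
proof -
  have "compact ((\<lambda>(a, b). g a b) ` ({-R..R} \<times> {-R..R}))"
    by (rule compact_continuous_image) (auto intro: continuous_on_subset[OF assms] compact_Times)
  then obtain B where B: "\<forall>z\<in>(\<lambda>(a, b). g a b) ` ({-R..R} \<times> {-R..R}). norm z \<le> B"
    using compact_imp_bounded bounded_iff by metis
  show ?thesis
  proof (intro exI allI impI)
    fix a b :: real assume "\<bar>a\<bar> \<le> R" "\<bar>b\<bar> \<le> R"
    then have "(a, b) \<in> {-R..R} \<times> {-R..R}" by auto
    then show "\<bar>g a b\<bar> \<le> B" using B by force
  qed
qed

lemma mvt_any:
  fixes F :: "nat \<Rightarrow> real \<Rightarrow> real"
  assumes "\<And>m z. (F m has_real_derivative F (Suc m) z) (at z)"
  shows "\<exists>t. \<bar>t\<bar> \<le> \<bar>y\<bar> \<and> F 0 y = F 0 0 + F 1 t * y"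
proof -
  have "\<exists>t. \<bar>t\<bar> \<le> \<bar>y\<bar> \<and> F 0 y = (\<Sum>m<1. F m 0 / fact m * y ^ m) + F 1 t / fact 1 * y ^ 1"
    by (rule Maclaurin_all_le[where diff = F]) (use assms in auto)
  then show ?thesis by simp
qed

lemma db_bounds:
  fixes Db :: "real \<Rightarrow> real \<Rightarrow> real" and u :: "real \<Rightarrow> real"
    and P :: "nat \<Rightarrow> nat \<Rightarrow> real \<Rightarrow> real \<Rightarrow> real"
  assumes P0: "P 0 0 = Db"
    and PD: "\<forall>m n a b. ((\<lambda>s. P m n s b) has_real_derivative P (Suc m) n a b) (at a) \<and>
                ((\<lambda>t. P m n a t) has_real_derivative P m (Suc n) a b) (at b)"
    and PC: "\<forall>m n. continuous_on UNIV (\<lambda>(a, b). P m n a b)"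
    and uc: "\<And>y. isCont u y"
    and e1: "ebd (\<lambda>h. (u (x + h) - u x) / h)"
    and e2: "ebd (\<lambda>h. (u (x - h) - u x) / h)"
  shows "ebd (\<lambda>h. Db (u x) (u (x + h)))"
    and "ebd (\<lambda>h. (Db (u x) (u (x + h)) - Db (u (x - h)) (u x)) / h)"
proof -
  obtain Mu where Mu: "\<forall>y\<in>cball x 1. \<bar>u y\<bar> \<le> Mu" using bound_cont[of u x 1] uc by blast
  define R where "R = 3 * Mu"
  obtain B00 where B00: "\<forall>a b. \<bar>a\<bar> \<le> R \<longrightarrow> \<bar>b\<bar> \<le> R \<longrightarrow> \<bar>P 0 0 a b\<bar> \<le> B00"
    using bound2[of "P 0 0" R] PC by blast
  obtain B01 where B01: "\<forall>a b. \<bar>a\<bar> \<le> R \<longrightarrow> \<bar>b\<bar> \<le> R \<longrightarrow> \<bar>P 0 1 a b\<bar> \<le> B01"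
    using bound2[of "P 0 1" R] PC by blast
  obtain B10 where B10: "\<forall>a b. \<bar>a\<bar> \<le> R \<longrightarrow> \<bar>b\<bar> \<le> R \<longrightarrow> \<bar>P 1 0 a b\<bar> \<le> B10"
    using bound2[of "P 1 0" R] PC by blast
  obtain C1 where C1: "eventually (\<lambda>h. \<bar>(u (x + h) - u x) / h\<bar> \<le> C1) (at_right 0)"
    using e1 unfolding ebd_def by blast
  obtain C2 where C2: "eventually (\<lambda>h. \<bar>(u (x - h) - u x) / h\<bar> \<le> C2) (at_right 0)"
    using e2 unfolding ebd_def by blast
  have ux: "\<bar>u x\<bar> \<le> Mu" using Mu by auto
  have uxh: "\<bar>u (x + h)\<bar> \<le> Mu" "\<bar>u (x - h)\<bar> \<le> Mu" if "h \<in> {0<..<1}" for h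
    using Mu that by (auto simp: dist_real_def)
  have R0: "Mu \<le> R" using ux unfolding R_def by linarith
  show "ebd (\<lambda>h. Db (u x) (u (x + h)))"
  proof (rule ebdI[of _ B00])
    show "eventually (\<lambda>h. \<bar>Db (u x) (u (x + h))\<bar> \<le> B00) (at_right 0)"
      using ev01
    proof (rule eventually_mono)
      fix h :: real assume h: "h \<in> {0<..<1}"
      show "\<bar>Db (u x) (u (x + h))\<bar> \<le> B00"
        using B00 uxh(1)[OF h] ux R0 unfolding P0 by auto
    qed
  qed
  show "ebd (\<lambda>h. (Db (u x) (u (x + h)) - Db (u (x - h)) (u x)) / h)"
  proof (rule ebdI[of _ "B01 * C1 + B10 * C2"])
    show "eventually (\<lambda>h. \<bar>(Db (u x) (u (x + h)) - Db (u (x - h)) (u x)) / h\<bar> \<le> B01 * C1 + B10 * C2) (at_right 0)"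
      using ev01 C1 C2
    proof eventually_elim
      case (elim h)
      have h: "0 < h" "h < 1" using elim(1) by auto
      define y where "y = u (x + h) - u x"
      define y' where "y' = u (x - h) - u x"
      have d2: "((\<lambda>s. P 0 m (u x) (u x + s)) has_real_derivative P 0 (Suc m) (u x) (u x + z)) (at z)" for m z
      proof -
        have "((\<lambda>s. u x + s) has_real_derivative 1) (at z)" by (auto intro!: derivative_eq_intros)
        from DERIV_chain2[of "\<lambda>t. P 0 m (u x) t", OF _ this] PD show ?thesis by simp
      qed
      have d1: "((\<lambda>s. P m 0 (u x + s) (u x)) has_real_derivative P (Suc m) 0 (u x + z) (u x)) (at z)" for m z
      proof -
        have "((\<lambda>s. u x + s) has_real_derivative 1) (at z)" by (auto intro!: derivative_eq_intros)
        from DERIV_chain2[of "\<lambda>t. P m 0 t (u x)", OF _ this] PD show ?thesis by simp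
      qed
      obtain t where t: "\<bar>t\<bar> \<le> \<bar>y\<bar>" and teq: "P 0 0 (u x) (u x + y) = P 0 0 (u x) (u x + 0) + P 0 1 (u x) (u x + t) * y"
        using mvt_any[of "\<lambda>m s. P 0 m (u x) (u x + s)" y] d2 by auto
      obtain s where s: "\<bar>s\<bar> \<le> \<bar>y'\<bar>" and seq: "P 0 0 (u x + y') (u x) = P 0 0 (u x + 0) (u x) + P 1 0 (u x + s) (u x) * y'"
        using mvt_any[of "\<lambda>m s. P m 0 (u x + s) (u x)" y'] d1 by auto
      have yb: "\<bar>y\<bar> \<le> 2 * Mu" "\<bar>y'\<bar> \<le> 2 * Mu" using uxh[OF elim(1)] ux unfolding y_def y'_def by auto
      have bt: "\<bar>P 0 1 (u x) (u x + t)\<bar> \<le> B01"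
        using B01 ux t yb R0 unfolding R_def by auto
      have bs: "\<bar>P 1 0 (u x + s) (u x)\<bar> \<le> B10"
        using B10 ux s yb R0 unfolding R_def by auto
      have eq: "(Db (u x) (u (x + h)) - Db (u (x - h)) (u x)) / h
          = P 0 1 (u x) (u x + t) * ((u (x + h) - u x) / h) - P 1 0 (u x + s) (u x) * ((u (x - h) - u x) / h)"
      proof -
        have "Db (u x) (u (x + h)) = Db (u x) (u x) + P 0 1 (u x) (u x + t) * y"
          using teq unfolding P0 y_def by simp
        moreover have "Db (u (x - h)) (u x) = Db (u x) (u x) + P 1 0 (u x + s) (u x) * y'"
          using seq unfolding P0 y'_def by simp
        ultimately have "Db (u x) (u (x + h)) - Db (u (x - h)) (u x) = P 0 1 (u x) (u x + t) * y - P 1 0 (u x + s) (u x) * y'"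
          by simp
        then have "(Db (u x) (u (x + h)) - Db (u (x - h)) (u x)) / h = P 0 1 (u x) (u x + t) * (y / h) - P 1 0 (u x + s) (u x) * (y' / h)"
          by (simp add: diff_divide_distrib)
        then show ?thesis unfolding y_def y'_def .

      qed
      have "\<bar>P 0 1 (u x) (u x + t) * ((u (x + h) - u x) / h)\<bar> \<le> B01 * C1"
        unfolding abs_mult using bt elim(2) by (intro mult_mono) auto
      moreover have "\<bar>P 1 0 (u x + s) (u x) * ((u (x - h) - u x) / h)\<bar> \<le> B10 * C2"
        unfolding abs_mult using bs elim(3) by (intro mult_mono) auto
      ultimately show ?case unfolding eq by linarith
    qed
  qed
qed


lemma ebd_divc: "ebd F \<Longrightarrow> ebd (\<lambda>h. F h / c)"
  using ebd_mult[of F "\<lambda>h. 1 / c"] ebd_const[of "1/c"] by simp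


lemma hX: "h \<noteq> 0 \<Longrightarrow> h * cdx u h x k = (nodal u h x (k+1) - nodal u h x (k-1))/2"
  unfolding cdx_def by (simp add: field_simps)

lemma hY: "h \<noteq> 0 \<Longrightarrow> h^2 * cdxx u h x k = (nodal u h x (k+2) - 2*nodal u h x k + nodal u h x (k-2))/4"
proof -
  assume h: "h \<noteq> 0"
  have a: "k + 1 + 1 = k + 2" "k + 1 - 1 = k" "k - 1 + 1 = k" "k - 1 - 1 = k - 2" by simp_all
  show ?thesis unfolding cdxx_def cdx_def a using h by (simp add: field_simps power2_eq_square)
qed

lemma R1: "(h::real) / 4 * (q - p) = (h * q - h * p) / 4" by (simp add: algebra_simps)
lemma R2: "(h::real)^2 / 4 * s = (h^2 * s) / 4" by simp
lemma R3: "(h::real) / 2 * p = (h * p) / 2" by simp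

lemma face:
  fixes f :: "real \<Rightarrow> real" and Db :: "real \<Rightarrow> real \<Rightarrow> real" and u :: "real \<Rightarrow> real"
  assumes hnz: "h \<noteq> 0"
    and df1: "deriv f = (\<lambda>v. be + 2*ga * v)" and df2: "deriv (deriv f) = (\<lambda>v. 2*ga)"
    and fq: "\<And>v. f v = al + be * v + ga * v^2"
    and nm2: "nodal u h x (j-2) = wm2" and nm1: "nodal u h x (j-1) = wm1"
    and n0: "nodal u h x j = w0" and n1: "nodal u h x (j+1) = w1"
    and n2: "nodal u h x (j+2) = w2" and n3: "nodal u h x (j+3) = w3"
  shows "qfsr_flux (1/3) (-2/3) (2/3) (2/15) (16/45) (4/5) f Db u h x j = (al + (37/60) * be * w0 + (37/60) * be * w1 - (2/15) * be * w2 + (1/60) * be * w3 - (2/15) * be * wm1 + (1/60) * be * wm2 + (191/270) * ga * w0 * w1 - (1/12) * ga * w0 * w2 + (1/135) * ga * w0 * w3 - (23/108) * ga * w0 * wm1 + (29/1080) * ga * w0 * wm2 + (851/2160) * ga * w0^2 - (23/108) * ga * w1 * w2 + (29/1080) * ga * w1 * w3 - (1/12) * ga * w1 * wm1 + (1/135) * ga * w1 * wm2 + (851/2160) * ga * w1^2 - (1/360) * ga * w2 * w3 + (1/180) * ga * w2 * wm1 - (1/4320) * ga * w2 * wm2 + (13/960) * ga * w2^2 - (1/4320) * ga * w3 * wm1 + (1/960) * ga * w3^2 - (1/360) * ga * wm1 * wm2 + (13/960) * ga * wm1^2 + (1/960) * ga * wm2^2) - Db w0 w1 * (-(5/12) *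 w0 + (5/12) * w1 - (5/24) * w2 + (1/24) * w3 + (5/24) * wm1 - (1/24) * wm2) / 2"
proof -
  have X0: "h * cdx u h x j = (w1 - wm1)/2" using hX[OF hnz, of u x j] by (simp add: n1 nm1)
  have X1: "h * cdx u h x (j+1) = (w2 - w0)/2" using hX[OF hnz, of u x "j+1"] by (simp add: n2 n0 add.assoc)
  have Y0: "h^2 * cdxx u h x j = (w2 - 2*w0 + wm2)/4" using hY[OF hnz, of u x j] by (simp add: n2 n0 nm2)
  have Y1: "h^2 * cdxx u h x (j+1) = (w3 - 2*w1 + wm1)/4"
  proof -
    have a: "j + 1 + 2 = j + 3" "j + 1 - 2 = j - 1" by simp_all
    show ?thesis using hY[OF hnz, of u x "j+1"] unfolding a by (simp add: n3 n1 nm1)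
  qed
  have df2': "deriv (\<lambda>v. be + 2*ga * v) = (\<lambda>v. 2*ga)" using df1 df2 by simp
  show ?thesis
    unfolding qfsr_flux_def Let_def df1 df2'
    apply (simp only: R1 R2 R3)
    apply (simp only: X0 X1 Y0 Y1 n0 n1 fq)
    by (simp add: algebra_simps power2_eq_square add_divide_distrib diff_divide_distrib)
qed

lemma poly_id:
  fixes c0 c1 c2 c3 c4 c5 q1 q2 q3 qm1 qm2 qm3 vm3 vm2 vm1 v0 v1 v2 v3 al be ga :: real
  assumes
    hm3: "vm3 = c0 + (-3) * c1 + 9 * c2 + (-27) * c3 + 81 * c4 + (-243) * c5 + qm3"
    and hm2: "vm2 = c0 + (-2) * c1 + 4 * c2 + (-8) * c3 + 16 * c4 + (-32) * c5 + qm2"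
    and hm1: "vm1 = c0 + (-1) * c1 + 1 * c2 + (-1) * c3 + 1 * c4 + (-1) * c5 + qm1"
    and h0: "v0 = c0"
    and h1: "v1 = c0 + 1 * c1 + 1 * c2 + 1 * c3 + 1 * c4 + 1 * c5 + q1"
    and h2: "v2 = c0 + 2 * c1 + 4 * c2 + 8 * c3 + 16 * c4 + 32 * c5 + q2"
    and h3: "v3 = c0 + 3 * c1 + 9 * c2 + 27 * c3 + 81 * c4 + 243 * c5 + q3"
  shows "(al + (37/60) * be * v0 + (37/60) * be * v1 - (2/15) * be * v2 + (1/60) * be * v3 - (2/15) * be * vm1 + (1/60) * be * vm2 + (191/270) * ga * v0 * v1 - (1/12) * ga * v0 * v2 + (1/135) * ga * v0 * v3 - (23/108) * ga * v0 * vm1 + (29/1080) * ga * v0 * vm2 + (851/2160) * ga * v0^2 - (23/108) * ga * v1 * v2 + (29/1080) * ga * v1 * v3 - (1/12) * ga * v1 * vm1 + (1/135) * ga * v1 * vm2 + (851/2160) * ga * v1^2 - (1/360) * ga * v2 * v3 + (1/180) * ga * v2 * vm1 - (1/4320) * ga * v2 * vm2 + (13/960) * ga * v2^2 - (1/4320) * ga * v3 * vm1 + (1/960) * ga * v3^2 - (1/360) * ga * vm1 * vm2 + (13/960) * ga * vm1^2 + (1/960) * ga * vm2^2) - (al + (37/60) * be * vm1 + (37/60) * be * v0 - (2/15) * be * v1 + (1/60) * be * v2 - (2/15) * be * vm2 + (1/60) * be * vm3 + (191/270) * ga * vm1 * v0 - (1/12) * ga * vm1 * v1 + (1/135) * ga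 * vm1 * v2 - (23/108) * ga * vm1 * vm2 + (29/1080) * ga * vm1 * vm3 + (851/2160) * ga * vm1^2 - (23/108) * ga * v0 * v1 + (29/1080) * ga * v0 * v2 - (1/12) * ga * v0 * vm2 + (1/135) * ga * v0 * vm3 + (851/2160) * ga * v0^2 - (1/360) * ga * v1 * v2 + (1/180) * ga * v1 * vm2 - (1/4320) * ga * v1 * vm3 + (13/960) * ga * v1^2 - (1/4320) * ga * v2 * vm2 + (1/960) * ga * v2^2 - (1/360) * ga * vm2 * vm3 + (13/960) * ga * vm2^2 + (1/960) * ga * vm3^2) = (be + 2*ga*c0)*c1 + ((3/4) * be * q1 - (3/20) * be * q2 + (1/60) * be * q3 - (3/4) * be * qm1 + (3/20) * be * qm2 - (1/60) * be * qm3 + (3/2) * c0 * q1 * ga - (3/10) * c0 * q2 * ga + (1/30) * c0 * q3 * ga - (3/2) * c0 * qm1 * ga + (3/10) * c0 * qm2 * ga - (1/30) * c0 * qm3 * ga + (5/12) * c1 * q1 * ga - (1/6) * c1 * q2 * ga + (1/36) * c1 * q3 * ga + (5/12) * c1 * qm1 * ga - (1/6) * c1 * qm2 * ga + (1/36) * c1 * qm3 * ga + (74/9) * c2 * c5 * ga + (37/216) * c2 * q1 * ga - (37/270) * c2 * q2 * ga + (37/1080) * c2 * q3 * ga - (37/216) * c2 * qm1 * ga + (37/270) * c2 * qm2 * ga - (37/1080) * c2 * qm3 * ga + (34/5) * c3 * c4 * ga - (13/60) * c3 * q1 * ga - (1/12) * c3 * q2 * ga + (11/180) * c3 * q3 *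 ga - (13/60) * c3 * qm1 * ga - (1/12) * c3 * qm2 * ga + (11/180) * c3 * qm3 * ga + (632/9) * c4 * c5 * ga - (409/1080) * c4 * q1 * ga - (1/27) * c4 * q2 * ga + (163/1080) * c4 * q3 * ga + (409/1080) * c4 * qm1 * ga + (1/27) * c4 * qm2 * ga - (163/1080) * c4 * qm3 * ga + (4/9) * c5 * q1 * ga - (1/12) * c5 * q2 * ga + (4/9) * c5 * q3 * ga + (4/9) * c5 * qm1 * ga - (1/12) * c5 * qm2 * ga + (4/9) * c5 * qm3 * ga - (227/1080) * q1 * q2 * ga + (29/1080) * q1 * q3 * ga + (1/540) * q1 * qm2 * ga + (1/4320) * q1 * qm3 * ga + (3287/8640) * q1^2 * ga - (1/360) * q2 * q3 * ga - (1/540) * q2 * qm1 * ga + (1/80) * q2^2 * ga - (1/4320) * q3 * qm1 * ga + (1/960) * q3^2 * ga + (227/1080) * qm1 * qm2 * ga - (29/1080) * qm1 * qm3 * ga - (3287/8640) * qm1^2 * ga + (1/360) * qm2 * qm3 * ga - (1/80) * qm2^2 * ga - (1/960) * qm3^2 * ga)"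
  unfolding assms
  by (simp add: algebra_simps power2_eq_square add_divide_distrib diff_divide_distrib)

lemma lin_id:
  fixes c0 c1 c2 c3 c4 c5 q1 q2 q3 qm1 qm2 qm3 vm3 vm2 vm1 v0 v1 v2 v3 :: real
  assumes
    hm3: "vm3 = c0 + (-3) * c1 + 9 * c2 + (-27) * c3 + 81 * c4 + (-243) * c5 + qm3"
    and hm2: "vm2 = c0 + (-2) * c1 + 4 * c2 + (-8) * c3 + 16 * c4 + (-32) * c5 + qm2"
    and hm1: "vm1 = c0 + (-1) * c1 + 1 * c2 + (-1) * c3 + 1 * c4 + (-1) * c5 + qm1"
    and h0: "v0 = c0"
    and h1: "v1 = c0 + 1 * c1 + 1 * c2 + 1 * c3 + 1 * c4 + 1 * c5 + q1"
    and h2: "v2 = c0 + 2 * c1 + 4 * c2 + 8 * c3 + 16 * c4 + 32 * c5 + q2"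
    and h3: "v3 = c0 + 3 * c1 + 9 * c2 + 27 * c3 + 81 * c4 + 243 * c5 + q3"
  shows "(-(5/12) * v0 + (5/12) * v1 - (5/24) * v2 + (1/24) * v3 + (5/24) * vm1 - (1/24) * vm2) = 5 * c5 + (5/12) * q1 - (5/24) * q2 + (1/24) * q3 + (5/24) * qm1 - (1/24) * qm2" and "(-(5/12) * vm1 + (5/12) * v0 - (5/24) * v1 + (1/24) * v2 + (5/24) * vm2 - (1/24) * vm3) = 5 * c5 - (5/24) * q1 + (1/24) * q2 - (5/12) * qm1 + (5/24) * qm2 - (1/24) * qm3"
  unfolding assms by (simp_all add: algebra_simps add_divide_distrib diff_divide_distrib)

lemma conv:
  fixes a0x a1x a2x a3x a4x a5x r1x r2x r3x rm1x rm2x rm3x be ga h :: real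
  shows "(3/4) * be * (h^6 * r1x) - (3/20) * be * (h^6 * r2x) + (1/60) * be * (h^6 * r3x) - (3/4) * be * (h^6 * rm1x) + (3/20) * be * (h^6 * rm2x) - (1/60) * be * (h^6 * rm3x) + (3/2) * a0x * (h^6 * r1x) * ga - (3/10) * a0x * (h^6 * r2x) * ga + (1/30) * a0x * (h^6 * r3x) * ga - (3/2) * a0x * (h^6 * rm1x) * ga + (3/10) * a0x * (h^6 * rm2x) * ga - (1/30) * a0x * (h^6 * rm3x) * ga + (5/12) * (a1x * h) * (h^6 * r1x) * ga - (1/6) * (a1x * h) * (h^6 * r2x) * ga + (1/36) * (a1x * h) * (h^6 * r3x) * ga + (5/12) * (a1x * h) * (h^6 * rm1x) * ga - (1/6) * (a1x * h) * (h^6 * rm2x) * ga + (1/36) * (a1x * h) * (h^6 * rm3x) * ga + (74/9) * (a2x * h^2) * (a5x * h^5) * ga + (37/216) * (a2x * h^2) * (h^6 * r1x) * ga - (37/270) * (a2x * h^2) * (h^6 * r2x) * ga + (37/1080) * (a2x * h^2) * (h^6 * r3x) * ga - (37/216) * (a2x * h^2) * (h^6 * rm1x) * ga + (37/270) * (a2x * h^2) * (h^6 * rm2x) * ga - (37/1080) * (a2x * h^2) * (h^6 * rm3x) * ga + (34/5) * (a3x * h^3) * (a4x * h^4) * ga - (13/60) * (a3x * h^3) * (h^6 * r1x) * ga - (1/12) * (a3x * h^3) * (h^6 * r2x) * ga + (11/180) * (a3x * h^3) * (h^6 * r3x) * ga - (13/60) * (a3x * h^3) * (h^6 * rm1x)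 * ga - (1/12) * (a3x * h^3) * (h^6 * rm2x) * ga + (11/180) * (a3x * h^3) * (h^6 * rm3x) * ga + (632/9) * (a4x * h^4) * (a5x * h^5) * ga - (409/1080) * (a4x * h^4) * (h^6 * r1x) * ga - (1/27) * (a4x * h^4) * (h^6 * r2x) * ga + (163/1080) * (a4x * h^4) * (h^6 * r3x) * ga + (409/1080) * (a4x * h^4) * (h^6 * rm1x) * ga + (1/27) * (a4x * h^4) * (h^6 * rm2x) * ga - (163/1080) * (a4x * h^4) * (h^6 * rm3x) * ga + (4/9) * (a5x * h^5) * (h^6 * r1x) * ga - (1/12) * (a5x * h^5) * (h^6 * r2x) * ga + (4/9) * (a5x * h^5) * (h^6 * r3x) * ga + (4/9) * (a5x * h^5) * (h^6 * rm1x) * ga - (1/12) * (a5x * h^5) * (h^6 * rm2x) * ga + (4/9) * (a5x * h^5) * (h^6 * rm3x) * ga - (227/1080) * (h^6 * r1x) * (h^6 * r2x) * ga + (29/1080) * (h^6 * r1x) * (h^6 * r3x) * ga + (1/540) * (h^6 * r1x) * (h^6 * rm2x) * ga + (1/4320) * (h^6 * r1x) * (h^6 * rm3x) * ga + (3287/8640) * (h^6 * r1x)^2 * ga - (1/360) * (h^6 * r2x) * (h^6 * r3x) * ga - (1/540) * (h^6 * r2x) * (h^6 * rm1x) * ga + (1/80) * (h^6 * r2x)^2 * ga - (1/4320) * (h^6 * r3x) * (h^6 * rm1x) * ga + (1/960) * (h^6 * r3x)^2 * ga + (227/1080) * (h^6 * rm1x) * (h^6 * rm2x) * ga - (29/1080)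 * (h^6 * rm1x) * (h^6 * rm3x) * ga - (3287/8640) * (h^6 * rm1x)^2 * ga + (1/360) * (h^6 * rm2x) * (h^6 * rm3x) * ga - (1/80) * (h^6 * rm2x)^2 * ga - (1/960) * (h^6 * rm3x)^2 * ga = h^6 * ((3/2) * a0x * ga * r1x - (3/10) * a0x * ga * r2x + (1/30) * a0x * ga * r3x - (3/2) * a0x * ga * rm1x + (3/10) * a0x * ga * rm2x - (1/30) * a0x * ga * rm3x + (5/12) * a1x * ga * h * r1x - (1/6) * a1x * ga * h * r2x + (1/36) * a1x * ga * h * r3x + (5/12) * a1x * ga * h * rm1x - (1/6) * a1x * ga * h * rm2x + (1/36) * a1x * ga * h * rm3x + (74/9) * a2x * a5x * ga * h + (37/216) * a2x * ga * h^2 * r1x - (37/270) * a2x * ga * h^2 * r2x + (37/1080) * a2x * ga * h^2 * r3x - (37/216) * a2x * ga * h^2 * rm1x + (37/270) * a2x * ga * h^2 * rm2x - (37/1080) * a2x * ga * h^2 * rm3x + (34/5) * a3x * a4x * ga * h - (13/60) * a3x * ga * h^3 * r1x - (1/12) * a3x * ga * h^3 * r2x + (11/180) * a3x * ga * h^3 * r3x - (13/60) * a3x * ga * h^3 * rm1x - (1/12) * a3x * ga * h^3 * rm2x + (11/180) * a3x * ga * h^3 * rm3x + (632/9) * a4x * a5x * ga * h^3 - (409/1080) * a4x * ga * h^4 * r1x - (1/27) * a4x * ga * h^4 * r2x + (163/1080) * a4x * ga * h^4 * r3x + (409/1080) * a4x * ga * h^4 * rm1x + (1/27) * a4x * ga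 * h^4 * rm2x - (163/1080) * a4x * ga * h^4 * rm3x + (4/9) * a5x * ga * h^5 * r1x - (1/12) * a5x * ga * h^5 * r2x + (4/9) * a5x * ga * h^5 * r3x + (4/9) * a5x * ga * h^5 * rm1x - (1/12) * a5x * ga * h^5 * rm2x + (4/9) * a5x * ga * h^5 * rm3x + (3/4) * be * r1x - (3/20) * be * r2x + (1/60) * be * r3x - (3/4) * be * rm1x + (3/20) * be * rm2x - (1/60) * be * rm3x - (227/1080) * ga * h^6 * r1x * r2x + (29/1080) * ga * h^6 * r1x * r3x + (1/540) * ga * h^6 * r1x * rm2x + (1/4320) * ga * h^6 * r1x * rm3x + (3287/8640) * ga * h^6 * r1x^2 - (1/360) * ga * h^6 * r2x * r3x - (1/540) * ga * h^6 * r2x * rm1x + (1/80) * ga * h^6 * r2x^2 - (1/4320) * ga * h^6 * r3x * rm1x + (1/960) * ga * h^6 * r3x^2 + (227/1080) * ga * h^6 * rm1x * rm2x - (29/1080) * ga * h^6 * rm1x * rm3x - (3287/8640) * ga * h^6 * rm1x^2 + (1/360) * ga * h^6 * rm2x * rm3x - (1/80) * ga * h^6 * rm2x^2 - (1/960) * ga * h^6 * rm3x^2)"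
    and "5 * (a5x * h^5) + (5/12) * (h^6 * r1x) - (5/24) * (h^6 * r2x) + (1/24) * (h^6 * r3x) + (5/24) * (h^6 * rm1x) - (1/24) * (h^6 * rm2x) = h^5 * (5 * a5x + (5/12) * h * r1x - (5/24) * h * r2x + (1/24) * h * r3x + (5/24) * h * rm1x - (1/24) * h * rm2x)"
    and "5 * (a5x * h^5) - (5/24) * (h^6 * r1x) + (1/24) * (h^6 * r2x) - (5/12) * (h^6 * rm1x) + (5/24) * (h^6 * rm2x) - (1/24) * (h^6 * rm3x) = h^5 * (5 * a5x - (5/24) * h * r1x + (1/24) * h * r2x - (5/12) * h * rm1x + (5/24) * h * rm2x - (1/24) * h * rm3x)"
    and "5 * a5x + (5/12) * h * r1x - (5/24) * h * r2x + (1/24) * h * r3x + (5/24) * h * rm1x - (1/24) * h * rm2x = 5 * a5x - (5/24) * h * r1x + (1/24) * h * r2x - (5/12) * h * rm1x + (5/24) * h * rm2x - (1/24) * h * rm3x + h * ((5/8) * r1x - (1/4) * r2x + (1/24) * r3x + (5/8) * rm1x - (1/4) * rm2x + (1/24) * rm3x)"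
  by (simp_all add: algebra_simps power2_eq_square add_divide_distrib diff_divide_distrib eval_nat_numeral)

lemma final_alg:
  fixes h F0 Fm L0 Lm M0 M1 K Q D0 Dm a0 a1 be ga :: real
  assumes "h \<noteq> 0" "F0 - Fm = (be + 2*ga*a0)*(a1 * h) + h^6 * Q" "L0 = h^5 * M0" "Lm = h^5 * M1" "M0 = M1 + h * K"
  shows "((F0 - D0 * L0 / 2) - (Fm - Dm * Lm / 2)) / h - (be + 2*ga*a0) * a1 = h^5 * (Q - (D0 * K + (D0 - Dm) / h * M1) / 2)"
proof -
  have p: "h^6 = h * h^5" by (simp add: eval_nat_numeral)
  have "F0 = Fm + (be + 2*ga*a0)*(a1 * h) + h^6 * Q" using assms(2) by simp
  then show ?thesis using assms(1) unfolding assms(3,4,5) by (simp add: field_simps p)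
qed

theorem mainTheorem8:
  fixes f D :: "real \<Rightarrow> real" and Db :: "real \<Rightarrow> real \<Rightarrow> real" and u :: "real \<Rightarrow> real"
    and x :: real
  assumes f_quad: "\<exists>\<alpha> \<beta> \<gamma> :: real. \<forall>v. f v = \<alpha> + \<beta> * v + \<gamma> * v^2"
    and D_smooth: "smooth1 D"
    and Db_smooth: "smooth2 Db"
    and Db_sym: "\<forall>v w. Db v w = Db w v"
    and Db_diag: "\<forall>v. Db v v = D v"
    and u_smooth: "smooth1 u"
  shows "(\<lambda>h. qfsr5_residual f Db u x h - deriv (\<lambda>y. f (u y)) x) \<in> O[at_right 0](\<lambda>h. h ^ 5)"
proof -
  obtain al be ga where fq0: "\<forall>v. f v = al + be * v + ga * v^2" using f_quad by blast
  have fq: "\<And>v. f v = al + be * v + ga * v^2" using fq0 by blast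
  have ff: "f = (\<lambda>v. al + be * v + ga * v^2)" using fq by (simp add: fun_eq_iff)
  have fder: "(f has_real_derivative (be + 2*ga * w)) (at w)" for w
    unfolding ff by (auto intro!: derivative_eq_intros)
  have df1: "deriv f = (\<lambda>v. be + 2*ga * v)"
    using fder DERIV_imp_deriv by (auto simp: fun_eq_iff)
  have d1der: "((\<lambda>v. be + 2*ga * v) has_real_derivative 2*ga) (at w)" for w
    by (auto intro!: derivative_eq_intros)
  have df2: "deriv (deriv f) = (\<lambda>v. 2*ga)"
    unfolding df1 using d1der DERIV_imp_deriv by (auto simp: fun_eq_iff)
  obtain G where G0: "G 0 = u" and GD: "\<And>n y. (G n has_real_derivative G (Suc n) y) (at y)"
    using u_smooth unfolding smooth1_def by blast
  obtain P where P0: "P 0 0 = Db"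
    and PD: "\<forall>m n a b. ((\<lambda>s. P m n s b) has_real_derivative P (Suc m) n a b) (at a) \<and>
                ((\<lambda>t. P m n a t) has_real_derivative P m (Suc n) a b) (at b)"
    and PC: "\<forall>m n. continuous_on UNIV (\<lambda>(a, b). P m n a b)"
    using Db_smooth unfolding smooth2_def by blast
  define a where "a n = G n x / fact n" for n
  define r where "r k h = (G 0 (x + k*h) - (\<Sum>m<6. G m x / fact m * (k*h)^m)) / h^6" for k h
  have r_ebd: "ebd (\<lambda>h. r k h)" for k
    unfolding r_def using taylor_ebd[where G=G and x=x and k=k and n=6, OF GD] by simp
  have sum6: "(\<Sum>m<6. G m x / fact m * y^m) = a 0 + a 1 * y + a 2 * y^2 + a 3 * y^3 + a 4 * y^4 + a 5 * y^5" for y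
    unfolding a_def by (simp add: eval_nat_numeral)
  have uexp: "u (x + k*h) = a 0 + a 1 * (k*h) + a 2 * (k*h)^2 + a 3 * (k*h)^3 + a 4 * (k*h)^4 + a 5 * (k*h)^5 + h^6 * r k h"
    if "h \<noteq> 0" for k h
    using that unfolding r_def sum6 by (simp add: G0)
  have a0: "a 0 = u x" unfolding a_def G0 by simp
  have a1: "a 1 = G 1 x" unfolding a_def by simp
  have dfu: "deriv (\<lambda>y. f (u y)) x = (be + 2*ga*a 0) * a 1"
  proof -
    have ud: "(u has_real_derivative G 1 x) (at x)" using GD[of 0 x] G0 by simp
    have "((\<lambda>y. f (u y)) has_real_derivative (be + 2*ga*u x) * G 1 x) (at x)"
      by (rule DERIV_chain2[OF fder ud])
    then show ?thesis using a0 a1 by (simp add: DERIV_imp_deriv)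
  qed
  have uc: "isCont u y" for y using GD[of 0 y] G0 DERIV_isCont by fastforce
  have e1: "ebd (\<lambda>h. (u (x + h) - u x) / h)" using taylor_ebd[where G=G and x=x and k=1 and n=1, OF GD] by (simp add: G0)
  have e2: "ebd (\<lambda>h. (u (x - h) - u x) / h)" using taylor_ebd[where G=G and x=x and k="-1" and n=1, OF GD] by (simp add: G0)
  note dbb = db_bounds[OF P0 PD PC uc e1 e2]
  define D0 where "D0 = (\<lambda>h. Db (nodal u h x 0) (nodal u h x 1))"
  define Dm where "Dm = (\<lambda>h. Db (nodal u h x (-1)) (nodal u h x 0))"
  define DD where "DD = (\<lambda>h. (D0 h - Dm h) / h)"
  have nod01: "nodal u h x 0 = u x" "nodal u h x 1 = u (x + h)" "nodal u h x (-1) = u (x - h)" for h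
    by (simp_all add: nodal_def)
  have D0e: "ebd D0" unfolding D0_def nod01 by (rule dbb(1))
  have DDe: "ebd DD" unfolding DD_def D0_def Dm_def nod01 by (rule dbb(2))
  define B where "B = (\<lambda>h. ((3/2) * a 0 * ga * r (1) h - (3/10) * a 0 * ga * r (2) h + (1/30) * a 0 * ga * r (3) h - (3/2) * a 0 * ga * r (-1) h + (3/10) * a 0 * ga * r (-2) h - (1/30) * a 0 * ga * r (-3) h + (5/12) * a 1 * ga * h * r (1) h - (1/6) * a 1 * ga * h * r (2) h + (1/36) * a 1 * ga * h * r (3) h + (5/12) * a 1 * ga * h * r (-1) h - (1/6) * a 1 * ga * h * r (-2) h + (1/36) * a 1 * ga * h * r (-3) h + (74/9) * a 2 * a 5 * ga * h + (37/216) * a 2 * ga * h^2 * r (1) h - (37/270) * a 2 * ga * h^2 * r (2) h + (37/1080) * a 2 * ga * h^2 * r (3) h - (37/216) * a 2 * ga * h^2 * r (-1) h + (37/270) * a 2 * ga * h^2 * r (-2) h - (37/1080) * a 2 * ga * h^2 * r (-3) h + (34/5) * a 3 * a 4 * ga * h - (13/60) * a 3 * ga * h^3 * r (1) h - (1/12) * a 3 * ga * h^3 * r (2) h + (11/180) * a 3 * ga * h^3 * r (3) h - (13/60) * a 3 * ga * h^3 * r (-1) h - (1/12) * a 3 * ga * h^3 * r (-2) h + (11/180) * a 3 * ga * h^3 * r (-3) h + (632/9) * a 4 * a 5 * ga * h^3 - (409/1080) * a 4 * ga * h^4 * r (1) h - (1/27) * a 4 * ga * h^4 * r (2) h + (163/1080)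 * a 4 * ga * h^4 * r (3) h + (409/1080) * a 4 * ga * h^4 * r (-1) h + (1/27) * a 4 * ga * h^4 * r (-2) h - (163/1080) * a 4 * ga * h^4 * r (-3) h + (4/9) * a 5 * ga * h^5 * r (1) h - (1/12) * a 5 * ga * h^5 * r (2) h + (4/9) * a 5 * ga * h^5 * r (3) h + (4/9) * a 5 * ga * h^5 * r (-1) h - (1/12) * a 5 * ga * h^5 * r (-2) h + (4/9) * a 5 * ga * h^5 * r (-3) h + (3/4) * be * r (1) h - (3/20) * be * r (2) h + (1/60) * be * r (3) h - (3/4) * be * r (-1) h + (3/20) * be * r (-2) h - (1/60) * be * r (-3) h - (227/1080) * ga * h^6 * r (1) h * r (2) h + (29/1080) * ga * h^6 * r (1) h * r (3) h + (1/540) * ga * h^6 * r (1) h * r (-2) h + (1/4320) * ga * h^6 * r (1) h * r (-3) h + (3287/8640) * ga * h^6 * r (1) h^2 - (1/360) * ga * h^6 * r (2) h * r (3) h - (1/540) * ga * h^6 * r (2) h * r (-1) h + (1/80) * ga * h^6 * r (2) h^2 - (1/4320) * ga * h^6 * r (3) h * r (-1) h + (1/960) * ga * h^6 * r (3) h^2 + (227/1080) * ga * h^6 * r (-1) h * r (-2) h - (29/1080) * ga * h^6 * r (-1) h * r (-3) h - (3287/8640) * ga * h^6 * r (-1) h^2 + (1/360) * ga * h^6 * r (-2) h * r (-3) h - (1/80) * ga * h^6 * r (-2) h^2 - (1/960) * ga * h^6 * r (-3) h^2) - (D0 h * ((5/8) * r (1) h - (1/4) * r (2) h + (1/24) * r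 (3) h + (5/8) * r (-1) h - (1/4) * r (-2) h + (1/24) * r (-3) h) + DD h * (5 * a 5 - (5/24) * h * r (1) h + (1/24) * h * r (2) h - (5/12) * h * r (-1) h + (5/24) * h * r (-2) h - (1/24) * h * r (-3) h)) / 2)"
  have Be: "ebd B" unfolding B_def
    by (intro ebd_add ebd_diff ebd_mult ebd_minus ebd_divc ebd_pow ebd_id ebd_const r_ebd D0e DDe)
  have key: "eventually (\<lambda>h. qfsr5_residual f Db u x h - deriv (\<lambda>y. f (u y)) x = h^5 * B h) (at_right 0)"
    using ev01
  proof (rule eventually_mono)
    fix h :: real assume hh: "h \<in> {0<..<1}"
    then have hnz: "h \<noteq> 0" by auto
    define c0 where "c0 = a 0"
    define c1 where "c1 = a 1 * h"
    define c2 where "c2 = a 2 * h^2"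
    define c3 where "c3 = a 3 * h^3"
    define c4 where "c4 = a 4 * h^4"
    define c5 where "c5 = a 5 * h^5"
      define qm3 where "qm3 = h^6 * r (-3) h"
      define qm2 where "qm2 = h^6 * r (-2) h"
      define qm1 where "qm1 = h^6 * r (-1) h"
      define q1 where "q1 = h^6 * r (1) h"
      define q2 where "q2 = h^6 * r (2) h"
      define q3 where "q3 = h^6 * r (3) h"
    have nod: "nodal u h x k = c0 + of_int k * c1 + (of_int k)^2 * c2 + (of_int k)^3 * c3 + (of_int k)^4 * c4 + (of_int k)^5 * c5 + h^6 * r (of_int k) h" for k :: int
      unfolding nodal_def c0_def c1_def c2_def c3_def c4_def c5_def using uexp[OF hnz, of "of_int k"]
      by (simp add: power_mult_distrib mult_ac)
      have nm3: "nodal u h x (-3) = c0 + (-3) * c1 + 9 * c2 + (-27) * c3 + 81 * c4 + (-243) * c5 + qm3" unfolding qm3_def using nod[of "-3"] by (simp add: power_mult_distrib)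
      have nm2: "nodal u h x (-2) = c0 + (-2) * c1 + 4 * c2 + (-8) * c3 + 16 * c4 + (-32) * c5 + qm2" unfolding qm2_def using nod[of "-2"] by (simp add: power_mult_distrib)
      have nm1: "nodal u h x (-1) = c0 + (-1) * c1 + 1 * c2 + (-1) * c3 + 1 * c4 + (-1) * c5 + qm1" unfolding qm1_def using nod[of "-1"] by (simp add: power_mult_distrib)
      have n1: "nodal u h x (1) = c0 + 1 * c1 + 1 * c2 + 1 * c3 + 1 * c4 + 1 * c5 + q1" unfolding q1_def using nod[of "1"] by (simp add: power_mult_distrib)
      have n2: "nodal u h x (2) = c0 + 2 * c1 + 4 * c2 + 8 * c3 + 16 * c4 + 32 * c5 + q2" unfolding q2_def using nod[of "2"] by (simp add: power_mult_distrib)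
      have n3: "nodal u h x (3) = c0 + 3 * c1 + 9 * c2 + 27 * c3 + 81 * c4 + 243 * c5 + q3" unfolding q3_def using nod[of "3"] by (simp add: power_mult_distrib)
      have n0: "nodal u h x (0) = c0" by (simp add: nodal_def c0_def a0)
    have f0: "qfsr_flux (1/3) (-2/3) (2/3) (2/15) (16/45) (4/5) f Db u h x 0 = (al + (37/60) * be * nodal u h x (0) + (37/60) * be * nodal u h x (1) - (2/15) * be * nodal u h x (2) + (1/60) * be * nodal u h x (3) - (2/15) * be * nodal u h x (-1) + (1/60) * be * nodal u h x (-2) + (191/270) * ga * nodal u h x (0) * nodal u h x (1) - (1/12) * ga * nodal u h x (0) * nodal u h x (2) + (1/135) * ga * nodal u h x (0) * nodal u h x (3) - (23/108) * ga * nodal u h x (0) * nodal u h x (-1) + (29/1080) * ga * nodal u h x (0) * nodal u h x (-2) + (851/2160) * ga * nodal u h x (0)^2 - (23/108) * ga * nodal u h x (1) * nodal u h x (2) + (29/1080) * ga * nodal u h x (1) * nodal u h x (3) - (1/12) * ga * nodal u h x (1) * nodal u h x (-1) + (1/135) * ga * nodal u h x (1) * nodal u h x (-2) + (851/2160) * ga * nodal u h x (1)^2 - (1/360) * ga * nodal u h x (2) * nodal u h x (3) + (1/180) * ga * nodal u h x (2) * nodal u h x (-1) - (1/4320) * ga * nodal u h x (2) * nodal u h x (-2) + (13/960) * ga * nodal u h x (2)^2 - (1/4320) * ga * nodal u h x (3) * nodal u h x (-1) + (1/960) * ga * nodal u h x (3)^2 - (1/360) * ga * nodal u h x (-1) *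 nodal u h x (-2) + (13/960) * ga * nodal u h x (-1)^2 + (1/960) * ga * nodal u h x (-2)^2) - Db (nodal u h x 0) (nodal u h x 1) * (-(5/12) * nodal u h x (0) + (5/12) * nodal u h x (1) - (5/24) * nodal u h x (2) + (1/24) * nodal u h x (3) + (5/24) * nodal u h x (-1) - (1/24) * nodal u h x (-2)) / 2"
      by (rule face[OF hnz df1 df2 fq]) simp_all
    have fm: "qfsr_flux (1/3) (-2/3) (2/3) (2/15) (16/45) (4/5) f Db u h x (-1) = (al + (37/60) * be * nodal u h x (-1) + (37/60) * be * nodal u h x (0) - (2/15) * be * nodal u h x (1) + (1/60) * be * nodal u h x (2) - (2/15) * be * nodal u h x (-2) + (1/60) * be * nodal u h x (-3) + (191/270) * ga * nodal u h x (-1) * nodal u h x (0) - (1/12) * ga * nodal u h x (-1) * nodal u h x (1) + (1/135) * ga * nodal u h x (-1) * nodal u h x (2) - (23/108) * ga * nodal u h x (-1) * nodal u h x (-2) + (29/1080) * ga * nodal u h x (-1) * nodal u h x (-3) + (851/2160) * ga * nodal u h x (-1)^2 - (23/108) * ga * nodal u h x (0) * nodal u h x (1) + (29/1080) * ga * nodal u h x (0) * nodal u h x (2) - (1/12) * ga * nodal u h x (0) * nodal u h x (-2) + (1/135) * ga * nodal u h x (0) * nodal u h x (-3) + (851/2160) * ga * nodal u h x (0)^2 - (1/360) * ga * nodal u h x (1) * nodal u h x (2) + (1/180) * ga * nodal u h x (1) * nodal u h x (-2) - (1/4320) * ga * nodal u h x (1) * nodal u h x (-3) + (13/960) * ga *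 nodal u h x (1)^2 - (1/4320) * ga * nodal u h x (2) * nodal u h x (-2) + (1/960) * ga * nodal u h x (2)^2 - (1/360) * ga * nodal u h x (-2) * nodal u h x (-3) + (13/960) * ga * nodal u h x (-2)^2 + (1/960) * ga * nodal u h x (-3)^2) - Db (nodal u h x (-1)) (nodal u h x 0) * (-(5/12) * nodal u h x (-1) + (5/12) * nodal u h x (0) - (5/24) * nodal u h x (1) + (1/24) * nodal u h x (2) + (5/24) * nodal u h x (-2) - (1/24) * nodal u h x (-3)) / 2"
      by (rule face[OF hnz df1 df2 fq]) simp_all
    have pid: "(al + (37/60) * be * nodal u h x (0) + (37/60) * be * nodal u h x (1) - (2/15) * be * nodal u h x (2) + (1/60) * be * nodal u h x (3) - (2/15) * be * nodal u h x (-1) + (1/60) * be * nodal u h x (-2) + (191/270) * ga * nodal u h x (0) * nodal u h x (1) - (1/12) * ga * nodal u h x (0) * nodal u h x (2) + (1/135) * ga * nodal u h x (0) * nodal u h x (3) - (23/108) * ga * nodal u h x (0) * nodal u h x (-1) + (29/1080) * ga * nodal u h x (0) * nodal u h x (-2) + (851/2160) * ga * nodal u h x (0)^2 - (23/108) * ga * nodal u h x (1) * nodal u h x (2) + (29/1080) * ga * nodal u h x (1) * nodal u h x (3) - (1/12) * ga * nodal u h x (1) * nodal u h x (-1) + (1/135) * ga * nodal u h x (1) * nodal u h x (-2) + (851/2160) * ga * nodal u h x (1)^2 - (1/360) * ga * nodal u h x (2) * nodal u h x (3) + (1/180) * ga * nodal u h x (2) * nodal u h x (-1) - (1/4320) *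 ga * nodal u h x (2) * nodal u h x (-2) + (13/960) * ga * nodal u h x (2)^2 - (1/4320) * ga * nodal u h x (3) * nodal u h x (-1) + (1/960) * ga * nodal u h x (3)^2 - (1/360) * ga * nodal u h x (-1) * nodal u h x (-2) + (13/960) * ga * nodal u h x (-1)^2 + (1/960) * ga * nodal u h x (-2)^2) - (al + (37/60) * be * nodal u h x (-1) + (37/60) * be * nodal u h x (0) - (2/15) * be * nodal u h x (1) + (1/60) * be * nodal u h x (2) - (2/15) * be * nodal u h x (-2) + (1/60) * be * nodal u h x (-3) + (191/270) * ga * nodal u h x (-1) * nodal u h x (0) - (1/12) * ga * nodal u h x (-1) * nodal u h x (1) + (1/135) * ga * nodal u h x (-1) * nodal u h x (2) - (23/108) * ga * nodal u h x (-1) * nodal u h x (-2) + (29/1080) * ga * nodal u h x (-1) * nodal u h x (-3) + (851/2160) * ga * nodal u h x (-1)^2 - (23/108) * ga * nodal u h x (0) * nodal u h x (1) + (29/1080) * ga * nodal u h x (0) * nodal u h x (2) - (1/12) * ga * nodal u h x (0) * nodal u h x (-2) + (1/135) * ga * nodal u h x (0) * nodal u h x (-3) + (851/2160) * ga * nodal u h x (0)^2 - (1/360) * ga * nodal u h x (1) * nodal u h x (2) + (1/180) * ga * nodal u h x (1) * nodal u h x (-2) - (1/4320) * ga * nodal u h x (1) * nodal u h x (-3) + (13/960) * ga * nodal u h x (1)^2 - (1/4320) * ga * nodal u h x (2) * nodal u h x (-2) + (1/960) * ga * nodal u h x (2)^2 - (1/360) * ga * nodal u h x (-2) * nodal u h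 x (-3) + (13/960) * ga * nodal u h x (-2)^2 + (1/960) * ga * nodal u h x (-3)^2) = (be + 2*ga*c0)*c1 + ((3/4) * be * q1 - (3/20) * be * q2 + (1/60) * be * q3 - (3/4) * be * qm1 + (3/20) * be * qm2 - (1/60) * be * qm3 + (3/2) * c0 * q1 * ga - (3/10) * c0 * q2 * ga + (1/30) * c0 * q3 * ga - (3/2) * c0 * qm1 * ga + (3/10) * c0 * qm2 * ga - (1/30) * c0 * qm3 * ga + (5/12) * c1 * q1 * ga - (1/6) * c1 * q2 * ga + (1/36) * c1 * q3 * ga + (5/12) * c1 * qm1 * ga - (1/6) * c1 * qm2 * ga + (1/36) * c1 * qm3 * ga + (74/9) * c2 * c5 * ga + (37/216) * c2 * q1 * ga - (37/270) * c2 * q2 * ga + (37/1080) * c2 * q3 * ga - (37/216) * c2 * qm1 * ga + (37/270) * c2 * qm2 * ga - (37/1080) * c2 * qm3 * ga + (34/5) * c3 * c4 * ga - (13/60) * c3 * q1 * ga - (1/12) * c3 * q2 * ga + (11/180) * c3 * q3 * ga - (13/60) * c3 * qm1 * ga - (1/12) * c3 * qm2 * ga + (11/180) * c3 * qm3 * ga + (632/9) * c4 * c5 * ga - (409/1080) * c4 * q1 * ga - (1/27) * c4 * q2 * ga + (163/1080) * c4 * q3 * ga + (409/1080) * c4 * qm1 * ga + (1/27) * c4 * qm2 * ga - (163/1080) * c4 * qm3 * ga + (4/9) * c5 * q1 * ga - (1/12) * c5 * q2 * ga + (4/9) * c5 * q3 * ga + (4/9) * c5 * qm1 * ga - (1/12)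 * c5 * qm2 * ga + (4/9) * c5 * qm3 * ga - (227/1080) * q1 * q2 * ga + (29/1080) * q1 * q3 * ga + (1/540) * q1 * qm2 * ga + (1/4320) * q1 * qm3 * ga + (3287/8640) * q1^2 * ga - (1/360) * q2 * q3 * ga - (1/540) * q2 * qm1 * ga + (1/80) * q2^2 * ga - (1/4320) * q3 * qm1 * ga + (1/960) * q3^2 * ga + (227/1080) * qm1 * qm2 * ga - (29/1080) * qm1 * qm3 * ga - (3287/8640) * qm1^2 * ga + (1/360) * qm2 * qm3 * ga - (1/80) * qm2^2 * ga - (1/960) * qm3^2 * ga)"
      by (rule poly_id[OF nm3 nm2 nm1 n0 n1 n2 n3])
    have l0: "(-(5/12) * nodal u h x (0) + (5/12) * nodal u h x (1) - (5/24) * nodal u h x (2) + (1/24) * nodal u h x (3) + (5/24) * nodal u h x (-1) - (1/24) * nodal u h x (-2)) = 5 * c5 + (5/12) * q1 - (5/24) * q2 + (1/24) * q3 + (5/24) * qm1 - (1/24) * qm2" by (rule lin_id(1)[OF nm3 nm2 nm1 n0 n1 n2 n3])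
    have lm: "(-(5/12) * nodal u h x (-1) + (5/12) * nodal u h x (0) - (5/24) * nodal u h x (1) + (1/24) * nodal u h x (2) + (5/24) * nodal u h x (-2) - (1/24) * nodal u h x (-3)) = 5 * c5 - (5/24) * q1 + (1/24) * q2 - (5/12) * qm1 + (5/24) * qm2 - (1/24) * qm3" by (rule lin_id(2)[OF nm3 nm2 nm1 n0 n1 n2 n3])
    have cv1: "(3/4) * be * (h^6 * r (1) h) - (3/20) * be * (h^6 * r (2) h) + (1/60) * be * (h^6 * r (3) h) - (3/4) * be * (h^6 * r (-1) h) + (3/20) * be * (h^6 * r (-2) h) - (1/60) * be * (h^6 * r (-3) h) + (3/2) * a 0 * (h^6 * r (1) h) * ga - (3/10) * a 0 * (h^6 * r (2) h) * ga + (1/30) * a 0 * (h^6 * r (3) h) * ga - (3/2) * a 0 * (h^6 * r (-1) h) * ga + (3/10) * a 0 * (h^6 * r (-2) h) * ga - (1/30) * a 0 * (h^6 * r (-3) h) * ga + (5/12) * (a 1 * h) * (h^6 * r (1) h) * ga - (1/6) * (a 1 * h) * (h^6 * r (2) h) * ga + (1/36) * (a 1 * h) * (h^6 * r (3) h) * ga + (5/12) * (a 1 * h) * (h^6 * r (-1) h) * ga - (1/6) * (a 1 * h) * (h^6 * r (-2) h) * ga + (1/36) * (a 1 * h) * (h^6 * r (-3) h) * ga + (74/9) * (a 2 * h^2) * (a 5 * h^5) * ga + (37/216) * (a 2 * h^2) * (h^6 * r (1) h) * ga - (37/270) * (a 2 * h^2) * (h^6 * r (2) h) * ga + (37/1080)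 * (a 2 * h^2) * (h^6 * r (3) h) * ga - (37/216) * (a 2 * h^2) * (h^6 * r (-1) h) * ga + (37/270) * (a 2 * h^2) * (h^6 * r (-2) h) * ga - (37/1080) * (a 2 * h^2) * (h^6 * r (-3) h) * ga + (34/5) * (a 3 * h^3) * (a 4 * h^4) * ga - (13/60) * (a 3 * h^3) * (h^6 * r (1) h) * ga - (1/12) * (a 3 * h^3) * (h^6 * r (2) h) * ga + (11/180) * (a 3 * h^3) * (h^6 * r (3) h) * ga - (13/60) * (a 3 * h^3) * (h^6 * r (-1) h) * ga - (1/12) * (a 3 * h^3) * (h^6 * r (-2) h) * ga + (11/180) * (a 3 * h^3) * (h^6 * r (-3) h) * ga + (632/9) * (a 4 * h^4) * (a 5 * h^5) * ga - (409/1080) * (a 4 * h^4) * (h^6 * r (1) h) * ga - (1/27) * (a 4 * h^4) * (h^6 * r (2) h) * ga + (163/1080) * (a 4 * h^4) * (h^6 * r (3) h) * ga + (409/1080) * (a 4 * h^4) * (h^6 * r (-1) h) * ga + (1/27) * (a 4 * h^4) * (h^6 * r (-2) h) * ga - (163/1080) * (a 4 * h^4) * (h^6 * r (-3) h) * ga + (4/9) * (a 5 * h^5) * (h^6 * r (1) h) * ga - (1/12) * (a 5 * h^5) * (h^6 * r (2) h) * ga + (4/9) * (a 5 * h^5) * (h^6 * r (3) h) * ga + (4/9) * (a 5 * h^5) * (h^6 * r (-1) h) * ga - (1/12) * (a 5 * h^5) * (h^6 * r (-2) h) * ga + (4/9) * (a 5 * h^5) * (h^6 * r (-3) h) * ga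 - (227/1080) * (h^6 * r (1) h) * (h^6 * r (2) h) * ga + (29/1080) * (h^6 * r (1) h) * (h^6 * r (3) h) * ga + (1/540) * (h^6 * r (1) h) * (h^6 * r (-2) h) * ga + (1/4320) * (h^6 * r (1) h) * (h^6 * r (-3) h) * ga + (3287/8640) * (h^6 * r (1) h)^2 * ga - (1/360) * (h^6 * r (2) h) * (h^6 * r (3) h) * ga - (1/540) * (h^6 * r (2) h) * (h^6 * r (-1) h) * ga + (1/80) * (h^6 * r (2) h)^2 * ga - (1/4320) * (h^6 * r (3) h) * (h^6 * r (-1) h) * ga + (1/960) * (h^6 * r (3) h)^2 * ga + (227/1080) * (h^6 * r (-1) h) * (h^6 * r (-2) h) * ga - (29/1080) * (h^6 * r (-1) h) * (h^6 * r (-3) h) * ga - (3287/8640) * (h^6 * r (-1) h)^2 * ga + (1/360) * (h^6 * r (-2) h) * (h^6 * r (-3) h) * ga - (1/80) * (h^6 * r (-2) h)^2 * ga - (1/960) * (h^6 * r (-3) h)^2 * ga = h^6 * ((3/2) * a 0 * ga * r (1) h - (3/10) * a 0 * ga * r (2) h + (1/30) * a 0 * ga * r (3) h - (3/2) * a 0 * ga * r (-1) h + (3/10) * a 0 * ga * r (-2) h - (1/30) * a 0 * ga * r (-3) h + (5/12) * a 1 * ga * h * r (1) h - (1/6) * a 1 * ga * h * r (2) h + (1/36) * a 1 * ga * h * r (3) h + (5/12) * a 1 * ga * h * r (-1) h - (1/6) * a 1 * ga * h * r (-2) h + (1/36) * a 1 * ga * h * r (-3) h + (74/9) * a 2 *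 a 5 * ga * h + (37/216) * a 2 * ga * h^2 * r (1) h - (37/270) * a 2 * ga * h^2 * r (2) h + (37/1080) * a 2 * ga * h^2 * r (3) h - (37/216) * a 2 * ga * h^2 * r (-1) h + (37/270) * a 2 * ga * h^2 * r (-2) h - (37/1080) * a 2 * ga * h^2 * r (-3) h + (34/5) * a 3 * a 4 * ga * h - (13/60) * a 3 * ga * h^3 * r (1) h - (1/12) * a 3 * ga * h^3 * r (2) h + (11/180) * a 3 * ga * h^3 * r (3) h - (13/60) * a 3 * ga * h^3 * r (-1) h - (1/12) * a 3 * ga * h^3 * r (-2) h + (11/180) * a 3 * ga * h^3 * r (-3) h + (632/9) * a 4 * a 5 * ga * h^3 - (409/1080) * a 4 * ga * h^4 * r (1) h - (1/27) * a 4 * ga * h^4 * r (2) h + (163/1080) * a 4 * ga * h^4 * r (3) h + (409/1080) * a 4 * ga * h^4 * r (-1) h + (1/27) * a 4 * ga * h^4 * r (-2) h - (163/1080) * a 4 * ga * h^4 * r (-3) h + (4/9) * a 5 * ga * h^5 * r (1) h - (1/12) * a 5 * ga * h^5 * r (2) h + (4/9) * a 5 * ga * h^5 * r (3) h + (4/9) * a 5 * ga * h^5 * r (-1) h - (1/12) * a 5 * ga * h^5 * r (-2) h + (4/9) * a 5 * ga * h^5 * r (-3) h + (3/4) * be * r (1) h - (3/20) * be * r (2) h + (1/60) * be * r (3) h - (3/4) * be * r (-1) h + (3/20) * be * r (-2) h - (1/60) * be * r (-3) h - (227/1080) * ga * h^6 * r (1) h * r (2) h + (29/1080) * ga * h^6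 * r (1) h * r (3) h + (1/540) * ga * h^6 * r (1) h * r (-2) h + (1/4320) * ga * h^6 * r (1) h * r (-3) h + (3287/8640) * ga * h^6 * r (1) h^2 - (1/360) * ga * h^6 * r (2) h * r (3) h - (1/540) * ga * h^6 * r (2) h * r (-1) h + (1/80) * ga * h^6 * r (2) h^2 - (1/4320) * ga * h^6 * r (3) h * r (-1) h + (1/960) * ga * h^6 * r (3) h^2 + (227/1080) * ga * h^6 * r (-1) h * r (-2) h - (29/1080) * ga * h^6 * r (-1) h * r (-3) h - (3287/8640) * ga * h^6 * r (-1) h^2 + (1/360) * ga * h^6 * r (-2) h * r (-3) h - (1/80) * ga * h^6 * r (-2) h^2 - (1/960) * ga * h^6 * r (-3) h^2)" by (rule conv(1))
    have cv2: "5 * (a 5 * h^5) + (5/12) * (h^6 * r (1) h) - (5/24) * (h^6 * r (2) h) + (1/24) * (h^6 * r (3) h) + (5/24) * (h^6 * r (-1) h) - (1/24) * (h^6 * r (-2) h) = h^5 * (5 * a 5 + (5/12) * h * r (1) h - (5/24) * h * r (2) h + (1/24) * h * r (3) h + (5/24) * h * r (-1) h - (1/24) * h * r (-2) h)" by (rule conv(2))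
    have cv3: "5 * (a 5 * h^5) - (5/24) * (h^6 * r (1) h) + (1/24) * (h^6 * r (2) h) - (5/12) * (h^6 * r (-1) h) + (5/24) * (h^6 * r (-2) h) - (1/24) * (h^6 * r (-3) h) = h^5 * (5 * a 5 - (5/24) * h * r (1) h + (1/24) * h * r (2) h - (5/12) * h * r (-1) h + (5/24) * h * r (-2) h - (1/24) * h * r (-3) h)" by (rule conv(3))
    have cv4: "5 * a 5 + (5/12) * h * r (1) h - (5/24) * h * r (2) h + (1/24) * h * r (3) h + (5/24) * h * r (-1) h - (1/24) * h * r (-2) h = 5 * a 5 - (5/24) * h * r (1) h + (1/24) * h * r (2) h - (5/12) * h * r (-1) h + (5/24) * h * r (-2) h - (1/24) * h * r (-3) h + h * ((5/8) * r (1) h - (1/4) * r (2) h + (1/24) * r (3) h + (5/8) * r (-1) h - (1/4) * r (-2) h + (1/24) * r (-3) h)" by (rule conv(4))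
    have pid': "(al + (37/60) * be * nodal u h x (0) + (37/60) * be * nodal u h x (1) - (2/15) * be * nodal u h x (2) + (1/60) * be * nodal u h x (3) - (2/15) * be * nodal u h x (-1) + (1/60) * be * nodal u h x (-2) + (191/270) * ga * nodal u h x (0) * nodal u h x (1) - (1/12) * ga * nodal u h x (0) * nodal u h x (2) + (1/135) * ga * nodal u h x (0) * nodal u h x (3) - (23/108) * ga * nodal u h x (0) * nodal u h x (-1) + (29/1080) * ga * nodal u h x (0) * nodal u h x (-2) + (851/2160) * ga * nodal u h x (0)^2 - (23/108) * ga * nodal u h x (1) * nodal u h x (2) + (29/1080) * ga * nodal u h x (1) * nodal u h x (3) - (1/12) * ga * nodal u h x (1) * nodal u h x (-1) + (1/135) * ga * nodal u h x (1) * nodal u h x (-2) + (851/2160) * ga * nodal u h x (1)^2 - (1/360) * ga * nodal u h x (2) * nodal u h x (3) + (1/180) * ga * nodal u h x (2) * nodal u h x (-1) - (1/4320) * ga * nodal u h x (2) * nodal u h x (-2) + (13/960) * ga * nodal u h x (2)^2 - (1/4320) * ga * nodal u h x (3) * nodal u h x (-1) + (1/960) * ga * nodal u h x (3)^2 - (1/360) * ga * nodal u h x (-1) * nodal u h x (-2) + (13/960) * ga * nodal u h x (-1)^2 + (1/960) * ga * nodal u h x (-2)^2) - (al + (37/60) * be * nodal u h x (-1) + (37/60) * be * nodal u h x (0) - (2/15) * be * nodal u h x (1) + (1/60) * be * nodal u h x (2) - (2/15) * be * nodal u h x (-2) + (1/60) * be * nodal u h x (-3) + (191/270) * ga * nodal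 u h x (-1) * nodal u h x (0) - (1/12) * ga * nodal u h x (-1) * nodal u h x (1) + (1/135) * ga * nodal u h x (-1) * nodal u h x (2) - (23/108) * ga * nodal u h x (-1) * nodal u h x (-2) + (29/1080) * ga * nodal u h x (-1) * nodal u h x (-3) + (851/2160) * ga * nodal u h x (-1)^2 - (23/108) * ga * nodal u h x (0) * nodal u h x (1) + (29/1080) * ga * nodal u h x (0) * nodal u h x (2) - (1/12) * ga * nodal u h x (0) * nodal u h x (-2) + (1/135) * ga * nodal u h x (0) * nodal u h x (-3) + (851/2160) * ga * nodal u h x (0)^2 - (1/360) * ga * nodal u h x (1) * nodal u h x (2) + (1/180) * ga * nodal u h x (1) * nodal u h x (-2) - (1/4320) * ga * nodal u h x (1) * nodal u h x (-3) + (13/960) * ga * nodal u h x (1)^2 - (1/4320) * ga * nodal u h x (2) * nodal u h x (-2) + (1/960) * ga * nodal u h x (2)^2 - (1/360) * ga * nodal u h x (-2) * nodal u h x (-3) + (13/960) * ga * nodal u h x (-2)^2 + (1/960) * ga * nodal u h x (-3)^2) = (be + 2*ga*a 0)*(a 1 * h) + h^6 * ((3/2) * a 0 * ga * r (1) h - (3/10) * a 0 * ga * r (2) h + (1/30) * a 0 * ga * r (3) h - (3/2) * a 0 * ga * r (-1) h + (3/10) * a 0 * ga * r (-2) h - (1/30) * a 0 * ga * r (-3) h + (5/12) * a 1 * ga * h * r (1) h - (1/6) * a 1 * ga * h * r (2) h + (1/36) * a 1 * ga * h * r (3) h + (5/12) * a 1 * ga * h * r (-1) h - (1/6) * a 1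 * ga * h * r (-2) h + (1/36) * a 1 * ga * h * r (-3) h + (74/9) * a 2 * a 5 * ga * h + (37/216) * a 2 * ga * h^2 * r (1) h - (37/270) * a 2 * ga * h^2 * r (2) h + (37/1080) * a 2 * ga * h^2 * r (3) h - (37/216) * a 2 * ga * h^2 * r (-1) h + (37/270) * a 2 * ga * h^2 * r (-2) h - (37/1080) * a 2 * ga * h^2 * r (-3) h + (34/5) * a 3 * a 4 * ga * h - (13/60) * a 3 * ga * h^3 * r (1) h - (1/12) * a 3 * ga * h^3 * r (2) h + (11/180) * a 3 * ga * h^3 * r (3) h - (13/60) * a 3 * ga * h^3 * r (-1) h - (1/12) * a 3 * ga * h^3 * r (-2) h + (11/180) * a 3 * ga * h^3 * r (-3) h + (632/9) * a 4 * a 5 * ga * h^3 - (409/1080) * a 4 * ga * h^4 * r (1) h - (1/27) * a 4 * ga * h^4 * r (2) h + (163/1080) * a 4 * ga * h^4 * r (3) h + (409/1080) * a 4 * ga * h^4 * r (-1) h + (1/27) * a 4 * ga * h^4 * r (-2) h - (163/1080) * a 4 * ga * h^4 * r (-3) h + (4/9) * a 5 * ga * h^5 * r (1) h - (1/12) * a 5 * ga * h^5 * r (2) h + (4/9) * a 5 * ga * h^5 * r (3) h + (4/9) * a 5 * ga * h^5 * r (-1) h - (1/12) * a 5 * ga * h^5 * r (-2) h + (4/9) * a 5 * ga * h^5 * r (-3) h + (3/4) * be * r (1) h - (3/20) * be * r (2) h + (1/60) * be * r (3) h - (3/4) * be * r (-1) h + (3/20) * be * r (-2) h - (1/60) * be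 * r (-3) h - (227/1080) * ga * h^6 * r (1) h * r (2) h + (29/1080) * ga * h^6 * r (1) h * r (3) h + (1/540) * ga * h^6 * r (1) h * r (-2) h + (1/4320) * ga * h^6 * r (1) h * r (-3) h + (3287/8640) * ga * h^6 * r (1) h^2 - (1/360) * ga * h^6 * r (2) h * r (3) h - (1/540) * ga * h^6 * r (2) h * r (-1) h + (1/80) * ga * h^6 * r (2) h^2 - (1/4320) * ga * h^6 * r (3) h * r (-1) h + (1/960) * ga * h^6 * r (3) h^2 + (227/1080) * ga * h^6 * r (-1) h * r (-2) h - (29/1080) * ga * h^6 * r (-1) h * r (-3) h - (3287/8640) * ga * h^6 * r (-1) h^2 + (1/360) * ga * h^6 * r (-2) h * r (-3) h - (1/80) * ga * h^6 * r (-2) h^2 - (1/960) * ga * h^6 * r (-3) h^2)"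
      using pid cv1 unfolding c0_def c1_def c2_def c3_def c4_def c5_def q1_def q2_def q3_def qm1_def qm2_def qm3_def
      by simp
    have l0': "(-(5/12) * nodal u h x (0) + (5/12) * nodal u h x (1) - (5/24) * nodal u h x (2) + (1/24) * nodal u h x (3) + (5/24) * nodal u h x (-1) - (1/24) * nodal u h x (-2)) = h^5 * (5 * a 5 + (5/12) * h * r (1) h - (5/24) * h * r (2) h + (1/24) * h * r (3) h + (5/24) * h * r (-1) h - (1/24) * h * r (-2) h)"
      using l0 cv2 unfolding c0_def c1_def c2_def c3_def c4_def c5_def q1_def q2_def q3_def qm1_def qm2_def qm3_def
      by simp
    have lm': "(-(5/12) * nodal u h x (-1) + (5/12) * nodal u h x (0) - (5/24) * nodal u h x (1) + (1/24) * nodal u h x (2) + (5/24) * nodal u h x (-2) - (1/24) * nodal u h x (-3)) = h^5 * (5 * a 5 - (5/24) * h * r (1) h + (1/24) * h * r (2) h - (5/12) * h * r (-1) h + (5/24) * h * r (-2) h - (1/24) * h * r (-3) h)"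
      using lm cv3 unfolding c0_def c1_def c2_def c3_def c4_def c5_def q1_def q2_def q3_def qm1_def qm2_def qm3_def
      by simp
    have X: "(((al + (37/60) * be * nodal u h x (0) + (37/60) * be * nodal u h x (1) - (2/15) * be * nodal u h x (2) + (1/60) * be * nodal u h x (3) - (2/15) * be * nodal u h x (-1) + (1/60) * be * nodal u h x (-2) + (191/270) * ga * nodal u h x (0) * nodal u h x (1) - (1/12) * ga * nodal u h x (0) * nodal u h x (2) + (1/135) * ga * nodal u h x (0) * nodal u h x (3) - (23/108) * ga * nodal u h x (0) * nodal u h x (-1) + (29/1080) * ga * nodal u h x (0) * nodal u h x (-2) + (851/2160) * ga * nodal u h x (0)^2 - (23/108) * ga * nodal u h x (1) * nodal u h x (2) + (29/1080) * ga * nodal u h x (1) * nodal u h x (3) - (1/12) * ga * nodal u h x (1) * nodal u h x (-1) + (1/135) * ga * nodal u h x (1) * nodal u h x (-2) + (851/2160) * ga * nodal u h x (1)^2 - (1/360) * ga * nodal u h x (2) * nodal u h x (3) + (1/180) * ga * nodal u h x (2) * nodal u h x (-1) - (1/4320) * ga * nodal u h x (2) * nodal u h x (-2) + (13/960) * ga * nodal u h x (2)^2 - (1/4320) * ga * nodal u h x (3) * nodal u h x (-1) + (1/960) * ga * nodal u h x (3)^2 - (1/360) * ga * nodal u h x (-1) * nodal u h x (-2) + (13/960) * ga * nodal u h x (-1)^2 + (1/960) * ga * nodal u h x (-2)^2) - D0 h * (-(5/12) * nodal u h x (0) + (5/12) * nodal u h x (1) - (5/24) * nodal u h x (2) + (1/24)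 * nodal u h x (3) + (5/24) * nodal u h x (-1) - (1/24) * nodal u h x (-2)) / 2) - ((al + (37/60) * be * nodal u h x (-1) + (37/60) * be * nodal u h x (0) - (2/15) * be * nodal u h x (1) + (1/60) * be * nodal u h x (2) - (2/15) * be * nodal u h x (-2) + (1/60) * be * nodal u h x (-3) + (191/270) * ga * nodal u h x (-1) * nodal u h x (0) - (1/12) * ga * nodal u h x (-1) * nodal u h x (1) + (1/135) * ga * nodal u h x (-1) * nodal u h x (2) - (23/108) * ga * nodal u h x (-1) * nodal u h x (-2) + (29/1080) * ga * nodal u h x (-1) * nodal u h x (-3) + (851/2160) * ga * nodal u h x (-1)^2 - (23/108) * ga * nodal u h x (0) * nodal u h x (1) + (29/1080) * ga * nodal u h x (0) * nodal u h x (2) - (1/12) * ga * nodal u h x (0) * nodal u h x (-2) + (1/135) * ga * nodal u h x (0) * nodal u h x (-3) + (851/2160) * ga * nodal u h x (0)^2 - (1/360) * ga * nodal u h x (1) * nodal u h x (2) + (1/180) * ga * nodal u h x (1) * nodal u h x (-2) - (1/4320) * ga * nodal u h x (1) * nodal u h x (-3) + (13/960) * ga * nodal u h x (1)^2 - (1/4320) * ga * nodal u h x (2) * nodal u h x (-2) + (1/960) * ga * nodal u h x (2)^2 - (1/360) * ga * nodal u h x (-2) * nodal u h x (-3) + (13/960) * ga * nodal u h x (-2)^2 + (1/960) * ga * nodal u h x (-3)^2) - Dm h * (-(5/12) * nodal u h x (-1) + (5/12) * nodal u h x (0) - (5/24) * nodal u h x (1) + (1/24) * nodal u h x (2) + (5/24)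 * nodal u h x (-2) - (1/24) * nodal u h x (-3)) / 2)) / h - (be + 2*ga*a 0) * a 1
       = h^5 * (((3/2) * a 0 * ga * r (1) h - (3/10) * a 0 * ga * r (2) h + (1/30) * a 0 * ga * r (3) h - (3/2) * a 0 * ga * r (-1) h + (3/10) * a 0 * ga * r (-2) h - (1/30) * a 0 * ga * r (-3) h + (5/12) * a 1 * ga * h * r (1) h - (1/6) * a 1 * ga * h * r (2) h + (1/36) * a 1 * ga * h * r (3) h + (5/12) * a 1 * ga * h * r (-1) h - (1/6) * a 1 * ga * h * r (-2) h + (1/36) * a 1 * ga * h * r (-3) h + (74/9) * a 2 * a 5 * ga * h + (37/216) * a 2 * ga * h^2 * r (1) h - (37/270) * a 2 * ga * h^2 * r (2) h + (37/1080) * a 2 * ga * h^2 * r (3) h - (37/216) * a 2 * ga * h^2 * r (-1) h + (37/270) * a 2 * ga * h^2 * r (-2) h - (37/1080) * a 2 * ga * h^2 * r (-3) h + (34/5) * a 3 * a 4 * ga * h - (13/60) * a 3 * ga * h^3 * r (1) h - (1/12) * a 3 * ga * h^3 * r (2) h + (11/180) * a 3 * ga * h^3 * r (3) h - (13/60) * a 3 * ga * h^3 * r (-1) h - (1/12) * a 3 * ga * h^3 * r (-2) h + (11/180) * a 3 * ga * h^3 * r (-3) h + (632/9) * a 4 * a 5 * ga * h^3 - (409/1080) * a 4 * ga * h^4 * r (1) h - (1/27) * a 4 * ga * h^4 * r (2) h + (163/1080) * a 4 * ga * h^4 * r (3) h + (409/1080) * a 4 * ga * h^4 * r (-1) h +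 (1/27) * a 4 * ga * h^4 * r (-2) h - (163/1080) * a 4 * ga * h^4 * r (-3) h + (4/9) * a 5 * ga * h^5 * r (1) h - (1/12) * a 5 * ga * h^5 * r (2) h + (4/9) * a 5 * ga * h^5 * r (3) h + (4/9) * a 5 * ga * h^5 * r (-1) h - (1/12) * a 5 * ga * h^5 * r (-2) h + (4/9) * a 5 * ga * h^5 * r (-3) h + (3/4) * be * r (1) h - (3/20) * be * r (2) h + (1/60) * be * r (3) h - (3/4) * be * r (-1) h + (3/20) * be * r (-2) h - (1/60) * be * r (-3) h - (227/1080) * ga * h^6 * r (1) h * r (2) h + (29/1080) * ga * h^6 * r (1) h * r (3) h + (1/540) * ga * h^6 * r (1) h * r (-2) h + (1/4320) * ga * h^6 * r (1) h * r (-3) h + (3287/8640) * ga * h^6 * r (1) h^2 - (1/360) * ga * h^6 * r (2) h * r (3) h - (1/540) * ga * h^6 * r (2) h * r (-1) h + (1/80) * ga * h^6 * r (2) h^2 - (1/4320) * ga * h^6 * r (3) h * r (-1) h + (1/960) * ga * h^6 * r (3) h^2 + (227/1080) * ga * h^6 * r (-1) h * r (-2) h - (29/1080) * ga * h^6 * r (-1) h * r (-3) h - (3287/8640) * ga * h^6 * r (-1) h^2 + (1/360) * ga * h^6 * r (-2) h * r (-3) h - (1/80) * ga * h^6 * r (-2) h^2 - (1/960) * ga * h^6 * r (-3) h^2) - (D0 h * ((5/8) * r (1) h - (1/4) * r (2) h + (1/24) * r (3) h + (5/8) * r (-1) h - (1/4) * r (-2) h + (1/24) * r (-3) h) + (D0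 h - Dm h) / h * (5 * a 5 - (5/24) * h * r (1) h + (1/24) * h * r (2) h - (5/12) * h * r (-1) h + (5/24) * h * r (-2) h - (1/24) * h * r (-3) h)) / 2)"
      by (rule final_alg[OF hnz pid' l0' lm' cv4])
    show "qfsr5_residual f Db u x h - deriv (\<lambda>y. f (u y)) x = h^5 * B h"
      using X unfolding qfsr5_residual_def f0 fm dfu B_def DD_def D0_def Dm_def .
  qed
  show ?thesis by (rule ebd_bigo[OF Be key])
qed

end
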